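(* For $n\ge 1$ let $\tau$ be a plane increasing binary tree of size $n$ chosen uniformly at random, and let $X_n$ be the number of distinct shapes (unlabeled plane binary trees) among the fringe subtrees of $\tau$, i.e. the size of the compacted tree of $\tau$. Then \[ \mathbb{E}(X_n) = \mathcal{O}\!\left(\frac{n}{\log n}\right) \quad \text{as } n\to\infty . \]
   Context: A plane binary tree is a rooted tree in which every node has a left and a right slot, each of which is either empty or holds a subtree (left and right are distinguished); its size is its number of nodes. A plane increasing binary tree of size $n$ is a plane binary tree with $n$ nodes labeled by the distinct integers $1,\dots,n$ such that labels increase along every path from the root; there are $n!$ of them (this is the random binary search tree model). The shape of such a tree is the unlabeled plane binary tree obtained by forgetting the labels. A fringe subtree is a node together with all its descendants. The compacted tree keeps one copy of each distinct fringe-subtree shape. *)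

theory Defs
  imports "HOL-Library.Tree" "HOL-Library.Landau_Symbols" "HOL-Probability.Probability_Mass_Function"
begin

definition shape :: "'a tree \<Rightarrow> unit tree" where
  "shape t = map_tree (\<lambda>_. ()) t"

definition inc_trees :: "nat \<Rightarrow> nat tree set" where
  "inc_trees n = {t. size t = n \<and> set_tree t = {1..n} \<and> heap t}"

text \<open>Size of the compacted tree: number of distinct shapes of fringe subtrees
  (nonempty subtrees, i.e. a node with all its descendants).\<close>
definition compacted_size :: "'a tree \<Rightarrow> nat" where
  "compacted_size t = card (shape ` (subtrees t - {Leaf}))"

definition expected_compacted_size :: "nat \<Rightarrow> real" where
  "expected_compacted_size n =
     measure_pmf.expectation (pmf_of_set (inc_trees n)) (\<lambda>t. real (compacted_size t))"

end

theory Submission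
  imports Defs "HOL-Real_Asymp.Real_Asymp"
begin


definition IT :: "nat set \<Rightarrow> nat tree set" where
  "IT S = {t. set_tree t = S \<and> distinct (inorder t) \<and> heap t}"

lemma set_tree_empty_iff: "set_tree t = {} \<longleftrightarrow> t = Leaf"
  by (cases t) auto

lemma IT_empty: "IT {} = {Leaf}"
  unfolding IT_def by (auto simp: set_tree_empty_iff)

lemma IT_Node: "Node l m r \<in> IT S \<longleftrightarrow> (l \<in> IT (set_tree l) \<and> r \<in> IT (set_tree r) \<and>
   S = insert m (set_tree l \<union> set_tree r) \<and> m \<notin> set_tree l \<and> m \<notin> set_tree r \<and>
   set_tree l \<inter> set_tree r = {} \<and> (\<forall>x\<in>set_tree l \<union> set_tree r. m \<le> x))"
  unfolding IT_def by (simp add: Un_commute insert_commute) blast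

lemma IT_set: "t \<in> IT S \<Longrightarrow> set_tree t = S"
  by (simp add: IT_def)

lemma IT_decomp:
  assumes "finite S" "S \<noteq> {}"
  shows "IT S = (\<Union>L\<in>Pow (S - {Min S}). (\<lambda>(l,r). Node l (Min S) r) ` (IT L \<times> IT (S - {Min S} - L)))"
    (is "_ = ?R")
proof
  show "IT S \<subseteq> ?R"
  proof
    fix t assume t: "t \<in> IT S"
    show "t \<in> ?R"
    proof (cases t)
      case Leaf then show ?thesis using t assms by (simp add: IT_def)
    next
      case (Node l m r)
      have N: "l \<in> IT (set_tree l)" "r \<in> IT (set_tree r)"
        "S = insert m (set_tree l \<union> set_tree r)" "m \<notin> set_tree l" "m \<notin> set_tree r"
        "set_tree l \<inter> set_tree r = {}" "\<forall>x\<in>set_tree l \<union> set_tree r. m \<le> x"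
        using t unfolding Node IT_Node by simp_all
      have mS: "m \<in> S" using N(3) by blast
      have mle: "\<And>y. y \<in> S \<Longrightarrow> m \<le> y" using N(3,7) by blast
      have "Min S = m" using assms(1) mle mS by (rule Min_eqI)
      then have m: "m = Min S" by simp
      have e': "set_tree r = S - {m} - set_tree l" using N(3-6) by auto
      have P': "set_tree l \<in> Pow (S - {m})" using N(3,4) by auto
      have e: "set_tree r = S - {Min S} - set_tree l" using e' m by simp
      have P: "set_tree l \<in> Pow (S - {Min S})" using P' m by simp
      have "(l, r) \<in> IT (set_tree l) \<times> IT (S - {Min S} - set_tree l)" using N(1,2) e by simp
      then have "t \<in> (\<lambda>(l,r). Node l (Min S) r) ` (IT (set_tree l) \<times> IT (S - {Min S} - set_tree l))"
        by (rule rev_image_eqI) (simp add: Node m)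
      then show ?thesis using P by (rule UN_I[rotated])
    qed
  qed
next
  show "?R \<subseteq> IT S"
  proof
    fix t assume "t \<in> ?R"
    then obtain L where L0: "L \<in> Pow (S - {Min S})"
      "t \<in> (\<lambda>(l,r). Node l (Min S) r) ` (IT L \<times> IT (S - {Min S} - L))" by (rule UN_E)
    from L0(2) obtain p where p: "t = (\<lambda>(l,r). Node l (Min S) r) p" "p \<in> IT L \<times> IT (S - {Min S} - L)"
      by (rule imageE)
    obtain l r where lr: "p = (l, r)" by (cases p)
    have L: "L \<subseteq> S - {Min S}" "l \<in> IT L" "r \<in> IT (S - {Min S} - L)"
      "t = Node l (Min S) r" using L0(1) p lr by auto
    have sl: "set_tree l = L" and sr: "set_tree r = S - {Min S} - L" using L(2,3) by (simp_all add: IT_set)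
    have "\<forall>x\<in>S. Min S \<le> x" using assms by simp
    moreover have "Min S \<in> S" using assms by simp
    ultimately show "t \<in> IT S" unfolding L(4) IT_Node sl sr
    proof (intro conjI)
      show "l \<in> IT L" "r \<in> IT (S - {Min S} - L)" by fact+
      show "S = insert (Min S) (L \<union> (S - {Min S} - L))" using L(1) \<open>Min S \<in> S\<close> by blast
    qed (use L(1) in blast)+
  qed
qed

lemma IT_disjoint:
  "L \<noteq> L' \<Longrightarrow> ((\<lambda>(l,r). Node l m r) ` (IT L \<times> IT (A - L))) \<inter> ((\<lambda>(l,r). Node l m r) ` (IT L' \<times> IT (A - L'))) = {}"
  by (auto dest: IT_set)

lemma IT_inj: "inj_on (\<lambda>(l,r). Node l m r) X"
  by (auto simp: inj_on_def)

fun big :: "nat \<Rightarrow> 'a tree \<Rightarrow> nat" where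
  "big k Leaf = 0"
| "big k (Node l x r) = big k l + big k r + (if k < size l + size r + 1 then 1 else 0)"

lemma big_Node: "big k (Node l x r) = big k l + big k r + (if k < size (Node l x r) then 1 else 0)"
  by simp

lemma sum_Pow_card:
  assumes "finite A"
  shows "(\<Sum>L\<in>Pow A. h (card L)) = (\<Sum>j\<le>card A. of_nat (card A choose j) * h j)"
proof -
  have "(\<Sum>L\<in>Pow A. h (card L)) = (\<Sum>j\<in>{..card A}. \<Sum>L\<in>{L\<in>Pow A. card L = j}. h (card L))"
    by (rule sum.group[symmetric]) (auto simp: assms card_mono)
  also have "\<dots> = (\<Sum>j\<le>card A. of_nat (card A choose j) * h j)"
  proof (rule sum.cong[OF refl])
    fix j assume "j \<in> {..card A}"
    have "(\<Sum>L\<in>{L\<in>Pow A. card L = j}. h (card L)) = (\<Sum>L\<in>{L. L \<subseteq> A \<and> card L = j}. h j)"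
      by (rule sum.cong) auto
    also have "\<dots> = of_nat (card A choose j) * h j" using n_subsets[OF assms, of j] by simp
    finally show "(\<Sum>L\<in>{L\<in>Pow A. card L = j}. h (card L)) = of_nat (card A choose j) * h j" .
  qed
  finally show ?thesis .
qed

definition g :: "nat \<Rightarrow> nat \<Rightarrow> real" where
  "g k n = (if n \<le> k then 0 else 2 * (real n + 1) / (real k + 2) - 1)"

lemma g_alg:
  fixes a d :: real assumes "d > 0"
  shows "a * (2 * (a + 1) / d - 1) - a + 2 * (2 * (a + 1) / d - 1) = (a + 1) * (2 * (a + 2) / d - 1) - (a + 1)"
proof -
  have "a * (2 * (a + 1) / d) + 2 * (2 * (a + 1) / d) = (a + 1) * (2 * (a + 2) / d)"
    using assms by (simp add: divide_simps) algebra
  then show ?thesis by (simp add: algebra_simps)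
qed

lemma g_sum: "2 * (\<Sum>j<n. g k j) = real n * g k n - (if k < n then real n else 0)"
proof (induction n)
  case 0 then show ?case by (simp add: g_def)
next
  case (Suc n)
  have "2 * (\<Sum>j<Suc n. g k j) = real n * g k n - (if k < n then real n else 0) + 2 * g k n"
    using Suc by simp
  also have "\<dots> = real (Suc n) * g k (Suc n) - (if k < Suc n then real (Suc n) else 0)"
  proof (cases "n < k")
    case True then show ?thesis by (simp add: g_def)
  next
    case False
    show ?thesis
    proof (cases "n = k")
      case True then show ?thesis by (simp add: g_def field_simps)
    next
      case False
      with \<open>\<not> n < k\<close> have "k < n" by simp
      then have e1: "g k n = 2 * (real n + 1) / (real k + 2) - 1"
        and e2: "g k (Suc n) = 2 * (real n + 2) / (real k + 2) - 1" by (auto simp: g_def)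
      have "real n * g k n - real n + 2 * g k n = real (Suc n) * g k (Suc n) - real (Suc n)"
        unfolding e1 e2 using g_alg[of "real k + 2" "real n"] by simp
      then show ?thesis using \<open>k < n\<close> by simp
    qed
  qed
  finally show ?case .
qed

lemma IT_size:
  assumes "t \<in> IT S" shows "size t = card S"
proof -
  have s: "set (inorder t) = S" and d: "distinct (inorder t)" using assms by (simp_all add: IT_def)
  have "card (set (inorder t)) = length (inorder t)" using d by (rule distinct_card)
  then show ?thesis using s by simp
qed

lemma sum_node:
  fixes X Y :: "nat tree set" and c :: real
  assumes "finite X" "finite Y"
  shows "(\<Sum>(l,r)\<in>X \<times> Y. real (big k l) + real (big k r) + c)
     = real (card Y) * (\<Sum>l\<in>X. real (big k l)) + real (card X) * (\<Sum>r\<in>Y. real (big k r)) + real (card X) * real (card Y) * c"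
proof -
  have "(\<Sum>(l,r)\<in>X \<times> Y. real (big k l) + real (big k r) + c) = (\<Sum>l\<in>X. \<Sum>r\<in>Y. real (big k l) + real (big k r) + c)"
    by (simp add: sum.cartesian_product)
  also have "\<dots> = (\<Sum>l\<in>X. real (card Y) * real (big k l) + (\<Sum>r\<in>Y. real (big k r)) + real (card Y) * c)"
    by (simp add: sum.distrib)
  also have "\<dots> = real (card Y) * (\<Sum>l\<in>X. real (big k l)) + real (card X) * (\<Sum>r\<in>Y. real (big k r)) + real (card X) * real (card Y) * c"
    by (simp add: sum.distrib sum_distrib_left)
  finally show ?thesis .
qed

lemma IT_main:
  assumes "finite S"
  shows "finite (IT S) \<and> card (IT S) = fact (card S) \<and>
         (\<Sum>t\<in>IT S. real (big k t)) \<le> fact (card S) * g k (card S)"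
  using assms
proof (induction "card S" arbitrary: S rule: less_induct)
  case less
  show ?case
  proof (cases "S = {}")
    case True then show ?thesis by (simp add: IT_empty g_def)
  next
    case False
    define m where "m = Min S"
    define A where "A = S - {m}"
    define n where "n = card S"
    have fA: "finite A" using less.prems by (simp add: A_def)
    have mS: "m \<in> S" using False less.prems by (simp add: m_def)
    have cA: "card A = n - 1" using mS less.prems by (simp add: A_def n_def)
    have n0: "n > 0" using False less.prems by (simp add: n_def card_gt_0_iff)
    define B where "B L = (\<lambda>(l,r). Node l m r) ` (IT L \<times> IT (A - L))" for L
    have dec: "IT S = (\<Union>L\<in>Pow A. B L)"
      using IT_decomp[OF less.prems False] by (simp add: B_def A_def m_def)
    have IH: "finite (IT L) \<and> card (IT L) = fact (card L) \<and>
         (\<Sum>t\<in>IT L. real (big k t)) \<le> fact (card L) * g k (card L)" if "L \<subseteq> A" for L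
    proof -
      have "card L \<le> card A" using card_mono[OF fA that] .
      then have "card L < card S" using cA n0 n_def by linarith
      then show ?thesis using less(1) finite_subset[OF that fA] by blast
    qed
    have cAL: "card (A - L) = n - 1 - card L" if "L \<subseteq> A" for L
      using card_Diff_subset[OF finite_subset[OF that fA] that] cA by simp
    have fB: "finite (B L)" if "L \<subseteq> A" for L
      using IH[OF that] IH[of "A - L"] by (auto simp: B_def)
    have disj: "\<forall>L\<in>Pow A. \<forall>L'\<in>Pow A. L \<noteq> L' \<longrightarrow> B L \<inter> B L' = {}"
      unfolding B_def using IT_disjoint by blast
    have cB: "card (B L) = fact (card L) * fact (n - 1 - card L)" if "L \<subseteq> A" for L
      unfolding B_def using IH[OF that] IH[of "A - L"] cAL[OF that]
      by (simp add: card_image[OF IT_inj] card_cartesian_product)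
    have fIT: "finite (IT S)" unfolding dec using fA fB by (intro finite_UN_I) auto
    have "card (IT S) = (\<Sum>L\<in>Pow A. card (B L))"
      unfolding dec using fA fB disj by (simp add: card_UN_disjoint)
    also have "\<dots> = (\<Sum>L\<in>Pow A. fact (card L) * fact (n - 1 - card L))"
      by (rule sum.cong) (auto simp: cB)
    also have "\<dots> = (\<Sum>j\<le>card A. of_nat (card A choose j) * (fact j * fact (n - 1 - j)))"
      by (rule sum_Pow_card[OF fA])
    also have "\<dots> = (\<Sum>j\<le>card A. fact (n - 1))"
    proof (rule sum.cong)
      fix j assume "j \<in> {..card A}"
      then have "fact j * fact (n - 1 - j) * ((n - 1) choose j) = fact (n - 1)"
        using cA by (intro binomial_fact_lemma) simp
      then show "of_nat (card A choose j) * (fact j * fact (n - 1 - j)) = (fact (n - 1) :: nat)"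
        using cA by (simp add: ac_simps)
    qed simp
    also have "\<dots> = fact n" using n0 cA by (simp add: fact_reduce[of n])
    finally have cIT: "card (IT S) = fact (card S)" by (simp add: n_def)
    define c where "c = (if k < n then 1 else (0::real))"
    have sB: "(\<Sum>t\<in>B L. real (big k t)) \<le> fact (card L) * fact (n - 1 - card L) * (g k (card L) + g k (n - 1 - card L) + c)"
      if L: "L \<subseteq> A" for L
    proof -
      have sz: "size (Node l m r) = n" if "l \<in> IT L" "r \<in> IT (A - L)" for l r
      proof -
        have "Node l m r \<in> IT S" using dec that L by (auto simp: B_def)
        then show ?thesis by (metis IT_size n_def)
      qed
      obtain fl: "finite (IT L)" and cl: "card (IT L) = fact (card L)"
        and sl: "(\<Sum>t\<in>IT L. real (big k t)) \<le> fact (card L) * g k (card L)"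
        using IH[OF L] by blast
      obtain fr: "finite (IT (A - L))" and cr: "card (IT (A - L)) = fact (n - 1 - card L)"
        and sr: "(\<Sum>t\<in>IT (A - L). real (big k t)) \<le> fact (n - 1 - card L) * g k (n - 1 - card L)"
        using IH[of "A - L"] cAL[OF L] by auto
      have "(\<Sum>t\<in>B L. real (big k t)) = (\<Sum>(l,r)\<in>IT L \<times> IT (A - L). real (big k (Node l m r)))"
        unfolding B_def by (subst sum.reindex[OF IT_inj]) (simp add: case_prod_unfold)
      also have "\<dots> = (\<Sum>(l,r)\<in>IT L \<times> IT (A - L). real (big k l) + real (big k r) + c)"
      proof (rule sum.cong[OF refl])
        fix x assume "x \<in> IT L \<times> IT (A - L)"
        then obtain l r where "x = (l, r)" "l \<in> IT L" "r \<in> IT (A - L)" by auto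
        then show "(case x of (l, r) \<Rightarrow> real (big k (Node l m r))) = (case x of (l, r) \<Rightarrow> real (big k l) + real (big k r) + c)"
          using sz[of l r] unfolding big_Node by (simp add: c_def)
      qed
      also have "\<dots> = real (card (IT (A - L))) * (\<Sum>l\<in>IT L. real (big k l)) + real (card (IT L)) * (\<Sum>r\<in>IT (A - L). real (big k r)) + real (card (IT L)) * real (card (IT (A - L))) * c"
        using fl fr by (rule sum_node)
      also have "\<dots> = fact (n - 1 - card L) * (\<Sum>l\<in>IT L. real (big k l)) + fact (card L) * (\<Sum>r\<in>IT (A - L). real (big k r)) + fact (card L) * fact (n - 1 - card L) * c"
        unfolding cl cr of_nat_fact ..
      also have "\<dots> \<le> fact (n - 1 - card L) * (fact (card L) * g k (card L)) + fact (card L) * (fact (n - 1 - card L) * g k (n - 1 - card L)) + fact (card L) * fact (n - 1 - card L) * c"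
        by (intro add_mono mult_left_mono sl sr order_refl) simp_all
      also have "\<dots> = fact (card L) * fact (n - 1 - card L) * (g k (card L) + g k (n - 1 - card L) + c)"
        by (simp add: algebra_simps)
      finally show ?thesis .
    qed
    have "(\<Sum>t\<in>IT S. real (big k t)) = (\<Sum>L\<in>Pow A. \<Sum>t\<in>B L. real (big k t))"
      unfolding dec using fA fB disj by (simp add: sum.UNION_disjoint)
    also have "\<dots> \<le> (\<Sum>L\<in>Pow A. fact (card L) * fact (n - 1 - card L) * (g k (card L) + g k (n - 1 - card L) + c))"
      by (intro sum_mono sB) auto
    also have "\<dots> = (\<Sum>j\<le>card A. of_nat (card A choose j) * (fact j * fact (n - 1 - j) * (g k j + g k (n - 1 - j) + c)))"
      by (rule sum_Pow_card[OF fA])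
    also have "\<dots> = (\<Sum>j<n. fact (n - 1) * (g k j + g k (n - 1 - j) + c))"
    proof -
      have I: "{..card A} = {..<n}" using cA n0 by auto
      have eq: "of_nat (card A choose j) * (fact j * fact (n - 1 - j) * (g k j + g k (n - 1 - j) + c)) = fact (n - 1) * (g k j + g k (n - 1 - j) + c)" if "j \<le> card A" for j
      proof -
        have "(fact j * fact (n - 1 - j) * ((n - 1) choose j) :: nat) = fact (n - 1)"
          using that cA by (intro binomial_fact_lemma) simp
        then have "(fact j * fact (n - 1 - j) * of_nat ((n - 1) choose j) :: real) = fact (n - 1)"
          by (metis (mono_tags) of_nat_fact of_nat_mult)
        moreover have "of_nat (card A choose j) * (fact j * fact (n - 1 - j) * (g k j + g k (n - 1 - j) + c))
            = (fact j * fact (n - 1 - j) * of_nat ((n - 1) choose j)) * (g k j + g k (n - 1 - j) + c)"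
          using cA by (simp only: mult_ac)
        ultimately show ?thesis by simp
      qed
      show ?thesis unfolding I[symmetric] by (rule sum.cong[OF refl]) (rule eq, simp)
    qed
    also have "\<dots> = fact (n - 1) * ((\<Sum>j<n. g k j) + (\<Sum>j<n. g k (n - 1 - j)) + (\<Sum>j<n. c))"
      unfolding sum_distrib_left[symmetric] by (simp add: sum.distrib)
    also have "\<dots> = fact (n - 1) * (2 * (\<Sum>j<n. g k j) + real n * c)"
    proof -
      have "(\<Sum>j<n. g k (n - 1 - j)) = (\<Sum>j<n. g k j)"
        using sum.nat_diff_reindex[of "g k" n] by simp
      moreover have "(\<Sum>j<n. c) = real n * c" by simp
      ultimately show ?thesis by simp
    qed
    also have "\<dots> = fact (n - 1) * (real n * g k n)"
      using g_sum[of k n] by (simp add: c_def)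
    also have "\<dots> = fact n * g k n"
      using n0 by (simp add: fact_reduce[of n])
    finally show ?thesis using fIT cIT by (simp add: n_def)
  qed
qed



lemma finite_subtrees: "finite (subtrees t)"
  by (induction t) auto

lemma card_big: "card {u \<in> subtrees t. k < size u} \<le> big k t"
proof (induction t)
  case Leaf then show ?case by simp
next
  case (Node l x r)
  let ?N = "Node l x r"
  have "{u \<in> subtrees ?N. k < size u} \<subseteq>
        (if k < size ?N then {?N} else {}) \<union> {u \<in> subtrees l. k < size u} \<union> {u \<in> subtrees r. k < size u}"
    by auto
  then have "card {u \<in> subtrees ?N. k < size u} \<le>
        card ((if k < size ?N then {?N} else {}) \<union> {u \<in> subtrees l. k < size u} \<union> {u \<in> subtrees r. k < size u})"
    by (rule card_mono[rotated]) (simp add: finite_subtrees)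
  also have "\<dots> \<le> card (if k < size ?N then {?N} else {}) + card {u \<in> subtrees l. k < size u} + card {u \<in> subtrees r. k < size u}"
    by (meson add_le_mono card_Un_le dual_order.trans le_refl)
  also have "\<dots> \<le> big k ?N" using Node.IH by (simp del: big.simps add: big_Node)
  finally show ?case .
qed

fun enc :: "unit tree \<Rightarrow> bool list" where
  "enc Leaf = [False]"
| "enc (Node l _ r) = True # enc l @ enc r"

lemma enc_app: "enc a @ xs = enc b @ ys \<Longrightarrow> a = b \<and> xs = ys"
proof (induction a arbitrary: b xs ys)
  case Leaf then show ?case by (cases b) auto
next
  case (Node l1 u r1)
  show ?case
  proof (cases b)
    case Leaf then show ?thesis using Node.prems by simp
  next
    case (Node l2 v r2)
    have "enc l1 @ (enc r1 @ xs) = enc l2 @ (enc r2 @ ys)" using Node.prems \<open>b = _\<close> by simp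
    then have "l1 = l2" and h: "enc r1 @ xs = enc r2 @ ys" using Node.IH(1) by blast+
    then have "r1 = r2 \<and> xs = ys" using Node.IH(2) by blast
    then show ?thesis using \<open>l1 = l2\<close> \<open>b = _\<close> by simp
  qed
qed

lemma length_enc: "length (enc t) = 2 * size t + 1"
  by (induction t) auto

definition encp :: "nat \<Rightarrow> unit tree \<Rightarrow> bool list" where
  "encp k t = enc t @ replicate (2 * k + 1 - length (enc t)) False"

lemma shapes_card: "finite {s :: unit tree. size s \<le> k} \<and> card {s :: unit tree. size s \<le> k} \<le> 2 ^ (2 * k + 1)"
proof -
  have inj: "inj_on (encp k) {s. size s \<le> k}"
    by (auto simp: inj_on_def encp_def dest: enc_app)
  have sub: "encp k ` {s. size s \<le> k} \<subseteq> {xs. set xs \<subseteq> UNIV \<and> length xs = 2 * k + 1}"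
    by (auto simp: encp_def length_enc)
  have fin: "finite {xs :: bool list. set xs \<subseteq> UNIV \<and> length xs = 2 * k + 1}"
    by (rule finite_lists_length_eq) simp
  have "card {s :: unit tree. size s \<le> k} \<le> card {xs :: bool list. set xs \<subseteq> UNIV \<and> length xs = 2 * k + 1}"
    by (rule card_inj_on_le[OF inj sub fin])
  also have "\<dots> = card (UNIV :: bool set) ^ (2 * k + 1)" by (rule card_lists_length_eq) simp
  also have "\<dots> = 2 ^ (2 * k + 1)" by simp
  finally show ?thesis using inj_on_finite[OF inj sub fin] by simp
qed

lemma compacted_le: "compacted_size t \<le> 2 ^ (2 * k + 1) + big k t"
proof -
  have "shape ` (subtrees t - {Leaf}) \<subseteq> {s. size s \<le> k} \<union> shape ` {u \<in> subtrees t. k < size u}"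
    by (auto simp: shape_def)
  then have "compacted_size t \<le> card ({s. size s \<le> k} \<union> shape ` {u \<in> subtrees t. k < size u})"
    unfolding compacted_size_def using shapes_card[of k]
    by (intro card_mono) (auto simp: finite_subtrees)
  also have "\<dots> \<le> card {s :: unit tree. size s \<le> k} + card (shape ` {u \<in> subtrees t. k < size u})"
    by (rule card_Un_le)
  also have "\<dots> \<le> 2 ^ (2 * k + 1) + big k t"
    using shapes_card[of k] card_big[where k=k and t=t] card_image_le[of "{u \<in> subtrees t. k < size u}" shape]
    by (simp add: finite_subtrees)
  finally show ?thesis .
qed

lemma compacted_le_real: "real (compacted_size t) \<le> 2 ^ (2 * k + 1) + real (big k t)"
proof -
  have "real (compacted_size t) \<le> real (2 ^ (2 * k + 1) + big k t)"
    using compacted_le[of t k] by (simp only: of_nat_le_iff)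
  then show ?thesis by simp
qed

lemma inc_trees_IT: "inc_trees n = IT {1..n}"
proof (intro set_eqI iffI)
  fix t assume "t \<in> inc_trees n"
  then have "size t = n" "set (inorder t) = {1..n}" "heap t" by (auto simp: inc_trees_def)
  moreover have "distinct (inorder t)"
    using calculation by (intro card_distinct) simp
  ultimately show "t \<in> IT {1..n}" by (simp add: IT_def)
next
  fix t assume t: "t \<in> IT {1..n}"
  then show "t \<in> inc_trees n" using IT_size[OF t] by (simp add: IT_def inc_trees_def)
qed

lemma expected_bound: "expected_compacted_size n \<le> 2 ^ (2 * k + 1) + g k n"
proof -
  obtain fin: "finite (IT {1..n})" and c: "card (IT {1..n}) = fact n"
    and s: "(\<Sum>t\<in>IT {1..n}. real (big k t)) \<le> fact n * g k n"
    using IT_main[of "{1..n}" k] by auto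
  have ne: "IT {1..n} \<noteq> {}" using c by auto
  have c': "real (card (IT {1..n})) = fact n" unfolding c by (rule of_nat_fact)
  have "expected_compacted_size n = (\<Sum>t\<in>IT {1..n}. real (compacted_size t)) / fact n"
  proof -
    show ?thesis
      unfolding expected_compacted_size_def inc_trees_IT integral_pmf_of_set[OF ne fin] c' ..
  qed
  also have "\<dots> \<le> (\<Sum>t\<in>IT {1..n}. 2 ^ (2 * k + 1) + real (big k t)) / fact n"
    by (intro divide_right_mono sum_mono compacted_le_real) simp
  also have "\<dots> = (fact n * 2 ^ (2 * k + 1) + (\<Sum>t\<in>IT {1..n}. real (big k t))) / fact n"
    unfolding sum.distrib sum_constant c' by simp
  also have "\<dots> \<le> (fact n * 2 ^ (2 * k + 1) + fact n * g k n) / fact n"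
    using s by (intro divide_right_mono) auto
  also have "\<dots> = 2 ^ (2 * k + 1) + g k n"
    by (simp add: field_simps)
  finally show ?thesis .
qed



lemma k_bound1:
  assumes "n \<ge> 2"
  shows "(2::real) ^ (2 * (floor_log n div 4) + 1) \<le> 2 * sqrt (real n)"
proof -
  define k where "k = floor_log n div 4"
  have "(2::nat) ^ (4 * k) \<le> 2 ^ floor_log n" by (intro power_increasing) (auto simp: k_def)
  also have "\<dots> \<le> n" using assms by (intro floor_log_exp2_le) simp
  finally have "real ((2::nat) ^ (4 * k)) \<le> real n" by (simp only: of_nat_le_iff)
  then have "((2::real) ^ (2 * k))\<^sup>2 \<le> real n"
    by (simp add: power_mult[symmetric] mult.commute mult.left_commute)
  then have "(2::real) ^ (2 * k) \<le> sqrt (real n)" by (rule real_le_rsqrt)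
  then show ?thesis by (simp add: k_def)
qed

lemma k_bound2:
  assumes "n \<ge> 2"
  shows "g (floor_log n div 4) n \<le> 8 * ln 2 * (real n + 1) / ln (real n)"
proof -
  define k where "k = floor_log n div 4"
  have "n < 2 * 2 ^ floor_log n" by (rule floor_log_exp2_gt)
  also have "\<dots> = 2 ^ (floor_log n + 1)" by simp
  also have "\<dots> \<le> 2 ^ (4 * k + 4)" by (intro power_increasing) (auto simp: k_def)
  finally have "real n < real ((2::nat) ^ (4 * k + 4))" by (simp only: of_nat_less_iff)
  then have "real n < (2::real) ^ (4 * k + 4)" by simp
  then have "ln (real n) < ln ((2::real) ^ (4 * k + 4))" using assms by (subst ln_less_cancel_iff) auto
  also have "\<dots> = real (4 * k + 4) * ln 2" by (rule ln_realpow)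
  finally have l1: "ln (real n) < real (4 * k + 4) * ln 2" .
  have ln2: "ln (2::real) > 0" by simp
  have "real (4 * k + 4) * ln 2 \<le> 4 * ln 2 * (real k + 2)"
    using ln2 by (simp add: algebra_simps)
  with l1 have lnb: "ln (real n) \<le> 4 * ln 2 * (real k + 2)" by linarith
  have lnpos: "ln (real n) > 0" using assms by simp
  have "g k n \<le> 2 * (real n + 1) / (real k + 2)" by (simp add: g_def)
  also have "\<dots> \<le> 2 * (real n + 1) / (ln (real n) / (4 * ln 2))"
  proof (rule divide_left_mono)
    show "ln (real n) / (4 * ln 2) \<le> real k + 2" using lnb by (simp add: field_simps)
    show "0 \<le> 2 * (real n + 1)" by simp
    show "0 < (real k + 2) * (ln (real n) / (4 * ln 2))" using lnpos by (intro mult_pos_pos) auto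
  qed
  also have "\<dots> = 8 * ln 2 * (real n + 1) / ln (real n)" by (simp add: field_simps)
  finally show ?thesis by (simp add: k_def)
qed

lemma expected_nonneg: "expected_compacted_size n \<ge> 0"
  unfolding expected_compacted_size_def by (rule integral_nonneg_AE) simp

theorem theorem3p9:
  shows "(\<lambda>n. expected_compacted_size n) \<in> O(\<lambda>n. real n / ln (real n))"
proof -
  define B where "B n = 2 * sqrt (real n) + 8 * ln 2 * (real n + 1) / ln (real n)" for n :: nat
  have "eventually (\<lambda>n. norm (expected_compacted_size n) \<le> norm (B n)) at_top"
    using eventually_ge_at_top[of "2::nat"]
  proof eventually_elim
    case (elim n)
    have "expected_compacted_size n \<le> 2 ^ (2 * (floor_log n div 4) + 1) + g (floor_log n div 4) n"
      by (rule expected_bound)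
    also have "\<dots> \<le> B n" unfolding B_def
      using k_bound1[OF elim] k_bound2[OF elim] by linarith
    finally have le: "expected_compacted_size n \<le> B n" .
    then show ?case using expected_nonneg[of n] by simp
  qed
  then have "(\<lambda>n. expected_compacted_size n) \<in> O(B)" by (rule landau_o.big_mono)
  moreover have "B \<in> O(\<lambda>n. real n / ln (real n))" unfolding B_def by real_asymp
  ultimately show ?thesis by (rule landau_o.big_trans)
qed

end
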